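(* Let $X$ be the vertex set of a dual polar graph of diameter $d$ with distance $\partial$ and base vertex $u_0\in X$. Let $x,y\in X$, $U=x\cap y$, and $X'=\{z\in X: U\subseteq z\}$. For every $z\in X$ with $f_x(z)=f_y(z)=1$ there is a unique $z'\in X'$ such that $f_x(z')=f_y(z')=1$ and $f_{z'}(z)=1$.
   Context: Let $V$ be a finite-dimensional vector space over a finite field with a non-degenerate alternating, Hermitian, or quadratic form of Witt index $d$; $X$ is the set of maximal totally isotropic subspaces (dimension $d$), adjacent iff their intersection has dimension $d-1$, with distance $\partial(x,y)=d-\dim(x\cap y)$. For $z\in X$, $f_z:X\to\mathbb{R}$ is defined by $f_z(w)=1$ if $\partial(u_0,z)+\partial(z,w)=\partial(u_0,w)$ and $f_z(w)=0$ otherwise. *)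

theory Defs
  imports "HOL-Analysis.Analysis"
begin

text \<open>Ambient space: V = F^n, with F a finite field ('a) and n = CARD('n).
  Subspaces and dimension are those of the library interpretation vec
  (vector space over 'a with scalar multiplication (*s)).\<close>

definition bilinear_form :: "('a::field ^'n \<Rightarrow> 'a ^'n \<Rightarrow> 'a) \<Rightarrow> bool" where
  "bilinear_form B \<longleftrightarrow>
     (\<forall>x y z. B (x + y) z = B x z + B y z) \<and>
     (\<forall>x y z. B x (y + z) = B x y + B x z) \<and>
     (\<forall>c x y. B (c *s x) y = c * B x y) \<and>
     (\<forall>c x y. B x (c *s y) = c * B x y)"

definition nondegenerate_form :: "('a::field ^'n \<Rightarrow> 'a ^'n \<Rightarrow> 'a) \<Rightarrow> bool" where
  "nondegenerate_form B \<longleftrightarrow> (\<forall>x. (\<forall>y. B x y = 0) \<longrightarrow> x = 0)"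

definition alternating_form :: "('a::field ^'n \<Rightarrow> 'a ^'n \<Rightarrow> 'a) \<Rightarrow> bool" where
  "alternating_form B \<longleftrightarrow> bilinear_form B \<and> (\<forall>x. B x x = 0) \<and> nondegenerate_form B"

definition field_involution :: "('a::field \<Rightarrow> 'a) \<Rightarrow> bool" where
  "field_involution \<sigma> \<longleftrightarrow>
     (\<forall>a b. \<sigma> (a + b) = \<sigma> a + \<sigma> b) \<and> (\<forall>a b. \<sigma> (a * b) = \<sigma> a * \<sigma> b) \<and>
     (\<forall>a. \<sigma> (\<sigma> a) = a) \<and> (\<exists>a. \<sigma> a \<noteq> a)"

definition hermitian_form :: "('a::field \<Rightarrow> 'a) \<Rightarrow> ('a ^'n \<Rightarrow> 'a ^'n \<Rightarrow> 'a) \<Rightarrow> bool" where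
  "hermitian_form \<sigma> B \<longleftrightarrow> field_involution \<sigma> \<and>
     (\<forall>x y z. B (x + y) z = B x z + B y z) \<and>
     (\<forall>c x y. B (c *s x) y = c * B x y) \<and>
     (\<forall>x y. B y x = \<sigma> (B x y)) \<and>
     nondegenerate_form B"

definition polar_form :: "('a::field ^'n \<Rightarrow> 'a) \<Rightarrow> 'a ^'n \<Rightarrow> 'a ^'n \<Rightarrow> 'a" where
  "polar_form Q x y = Q (x + y) - Q x - Q y"

definition quadratic_form :: "('a::field ^'n \<Rightarrow> 'a) \<Rightarrow> bool" where
  "quadratic_form Q \<longleftrightarrow>
     (\<forall>c x. Q (c *s x) = c ^ 2 * Q x) \<and> bilinear_form (polar_form Q) \<and>
     (\<forall>x. Q x = 0 \<and> (\<forall>y. polar_form Q x y = 0) \<longrightarrow> x = 0)"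

definition totally_isotropic :: "('a::field ^'n \<Rightarrow> 'a ^'n \<Rightarrow> 'a) \<Rightarrow> ('a ^'n) set \<Rightarrow> bool" where
  "totally_isotropic B W \<longleftrightarrow> vec.subspace W \<and> (\<forall>x\<in>W. \<forall>y\<in>W. B x y = 0)"

definition totally_singular :: "('a::field ^'n \<Rightarrow> 'a) \<Rightarrow> ('a ^'n) set \<Rightarrow> bool" where
  "totally_singular Q W \<longleftrightarrow> vec.subspace W \<and> (\<forall>x\<in>W. Q x = 0)"

text \<open>A polar-space structure on V: the predicate "totally isotropic subspace" coming from
  a non-degenerate alternating, Hermitian, or quadratic form.\<close>
definition polar_iso :: "(('a::{field,finite} ^'n) set \<Rightarrow> bool) \<Rightarrow> bool" where
  "polar_iso tiso \<longleftrightarrow>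
     (\<exists>B. alternating_form B \<and> tiso = totally_isotropic B) \<or>
     (\<exists>\<sigma> B. hermitian_form \<sigma> B \<and> tiso = totally_isotropic B) \<or>
     (\<exists>Q. quadratic_form Q \<and> tiso = totally_singular Q)"

definition witt_index :: "(('a::field ^'n) set \<Rightarrow> bool) \<Rightarrow> nat" where
  "witt_index tiso = Max (vec.dim ` {W. tiso W})"

definition dp_vertices :: "(('a::field ^'n) set \<Rightarrow> bool) \<Rightarrow> ('a ^'n) set set" where
  "dp_vertices tiso = {W. tiso W \<and> (\<forall>W'. tiso W' \<and> W \<subseteq> W' \<longrightarrow> W' = W)}"

definition dp_dist :: "(('a::field ^'n) set \<Rightarrow> bool) \<Rightarrow> ('a ^'n) set \<Rightarrow> ('a ^'n) set \<Rightarrow> nat" where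
  "dp_dist tiso x y = witt_index tiso - vec.dim (x \<inter> y)"

text \<open>f_z(w) = 1 iff z lies on a geodesic from u0 to w.\<close>
definition f_vec :: "(('a::field ^'n) set \<Rightarrow> bool) \<Rightarrow> ('a ^'n) set \<Rightarrow> ('a ^'n) set \<Rightarrow> ('a ^'n) set \<Rightarrow> real" where
  "f_vec tiso u0 z w = (if dp_dist tiso u0 z + dp_dist tiso z w = dp_dist tiso u0 w then 1 else 0)"

end

theory Submission
  imports Defs
begin

definition ssum :: "('a::field ^'n) set \<Rightarrow> ('a ^'n) set \<Rightarrow> ('a ^'n) set" where
  "ssum S T = {x + y | x y. x \<in> S \<and> y \<in> T}"

lemma ssum_sub: "vec.subspace S \<Longrightarrow> vec.subspace T \<Longrightarrow> vec.subspace (ssum S T)"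
  unfolding ssum_def by (rule vec.subspace_sums)

lemma ssum_dim: "vec.subspace S \<Longrightarrow> vec.subspace T \<Longrightarrow> vec.dim (ssum S T) + vec.dim (S \<inter> T) = vec.dim S + vec.dim T"
  unfolding ssum_def by (rule vec.dim_sums_Int)

lemma ssum_le: "vec.subspace W \<Longrightarrow> S \<subseteq> W \<Longrightarrow> T \<subseteq> W \<Longrightarrow> ssum S T \<subseteq> W"
  unfolding ssum_def using vec.subspace_add by blast

lemma ssum_left: "vec.subspace T \<Longrightarrow> S \<subseteq> ssum S T"
  unfolding ssum_def using vec.subspace_0 by force

lemma ssum_right: "vec.subspace S \<Longrightarrow> T \<subseteq> ssum S T"
  unfolding ssum_def using vec.subspace_0 by force

lemma three_bil:
  fixes B :: "'a::field ^'n \<Rightarrow> 'a ^'n \<Rightarrow> 'a"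
  assumes ad1: "\<And>x y z. B (x + y) z = B x z + B y z"
    and ad2: "\<And>x y z. B x (y + z) = B x y + B x z"
    and s: "vec.subspace A1" "vec.subspace A2" "vec.subspace A3"
    and t: "totally_isotropic B T12" "totally_isotropic B T13" "totally_isotropic B T23"
    and c: "A1 \<union> A2 \<subseteq> T12" "A1 \<union> A3 \<subseteq> T13" "A2 \<union> A3 \<subseteq> T23"
  shows "totally_isotropic B (ssum (ssum A1 A2) A3)"
proof -
  have z: "B a b = 0" if "a \<in> T" "b \<in> T" "totally_isotropic B T" for a b T
    using that unfolding totally_isotropic_def by blast
  have z11: "B a b = 0" if "a \<in> A1" "b \<in> A1" for a b using z[OF _ _ t(1)] c that by blast
  have z12: "B a b = 0" if "a \<in> A1" "b \<in> A2" for a b using z[OF _ _ t(1)] c that by blast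
  have z21: "B a b = 0" if "a \<in> A2" "b \<in> A1" for a b using z[OF _ _ t(1)] c that by blast
  have z22: "B a b = 0" if "a \<in> A2" "b \<in> A2" for a b using z[OF _ _ t(1)] c that by blast
  have z13: "B a b = 0" if "a \<in> A1" "b \<in> A3" for a b using z[OF _ _ t(2)] c that by blast
  have z31: "B a b = 0" if "a \<in> A3" "b \<in> A1" for a b using z[OF _ _ t(2)] c that by blast
  have z33: "B a b = 0" if "a \<in> A3" "b \<in> A3" for a b using z[OF _ _ t(2)] c that by blast
  have z23: "B a b = 0" if "a \<in> A2" "b \<in> A3" for a b using z[OF _ _ t(3)] c that by blast
  have z32: "B a b = 0" if "a \<in> A3" "b \<in> A2" for a b using z[OF _ _ t(3)] c that by blast
  show ?thesis
    unfolding totally_isotropic_def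
  proof (intro conjI ballI)
    show "vec.subspace (ssum (ssum A1 A2) A3)" using s by (intro ssum_sub)
  next
    fix u v assume "u \<in> ssum (ssum A1 A2) A3" "v \<in> ssum (ssum A1 A2) A3"
    then obtain a1 a2 a3 b1 b2 b3 where "u = a1 + a2 + a3" "v = b1 + b2 + b3"
      "a1 \<in> A1" "a2 \<in> A2" "a3 \<in> A3" "b1 \<in> A1" "b2 \<in> A2" "b3 \<in> A3"
      unfolding ssum_def by blast
    then show "B u v = 0" by (simp add: ad1 ad2 z11 z12 z13 z21 z22 z23 z31 z32 z33)
  qed
qed

lemma three_quad:
  fixes Q :: "'a::field ^'n \<Rightarrow> 'a"
  assumes q: "quadratic_form Q"
    and s: "vec.subspace A1" "vec.subspace A2" "vec.subspace A3"
    and t: "totally_singular Q T12" "totally_singular Q T13" "totally_singular Q T23"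
    and c: "A1 \<union> A2 \<subseteq> T12" "A1 \<union> A3 \<subseteq> T13" "A2 \<union> A3 \<subseteq> T23"
  shows "totally_singular Q (ssum (ssum A1 A2) A3)"
proof -
  have bl: "bilinear_form (polar_form Q)" using q unfolding quadratic_form_def by blast
  have ad1: "polar_form Q (x + y) z = polar_form Q x z + polar_form Q y z" for x y z
    using bl unfolding bilinear_form_def by blast
  have exp: "Q (x + y) = Q x + Q y + polar_form Q x y" for x y
    unfolding polar_form_def by simp
  have z: "polar_form Q a b = 0" "Q a = 0" if "a \<in> T" "b \<in> T" "totally_singular Q T" for a b T
    using that unfolding totally_singular_def polar_form_def using vec.subspace_add by fastforce+
  show ?thesis
    unfolding totally_singular_def
  proof (intro conjI ballI)
    show "vec.subspace (ssum (ssum A1 A2) A3)" using s by (intro ssum_sub)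
  next
    fix u assume "u \<in> ssum (ssum A1 A2) A3"
    then obtain a1 a2 a3 where u: "u = a1 + a2 + a3"
      "a1 \<in> A1" "a2 \<in> A2" "a3 \<in> A3"
      unfolding ssum_def by blast
    have "polar_form Q a1 a2 = 0" using z(1)[OF _ _ t(1)] c u by blast
    moreover have "polar_form Q a1 a3 = 0" using z(1)[OF _ _ t(2)] c u by blast
    moreover have "polar_form Q a2 a3 = 0" using z(1)[OF _ _ t(3)] c u by blast
    moreover have "Q a1 = 0" using z(2)[OF _ _ t(1), of a1 a1] c u by blast
    moreover have "Q a2 = 0" using z(2)[OF _ _ t(1), of a2 a2] c u by blast
    moreover have "Q a3 = 0" using z(2)[OF _ _ t(2), of a3 a3] c u by blast
    ultimately
    show "Q u = 0" unfolding u by (simp add: exp ad1)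
  qed
qed


lemma polar_sub: "polar_iso tiso \<Longrightarrow> tiso W \<Longrightarrow> vec.subspace W"
  unfolding polar_iso_def totally_isotropic_def totally_singular_def by auto

lemma polar_three:
  assumes p: "polar_iso tiso"
    and s: "vec.subspace A1" "vec.subspace A2" "vec.subspace A3"
    and t: "tiso T12" "tiso T13" "tiso T23"
    and c: "A1 \<union> A2 \<subseteq> T12" "A1 \<union> A3 \<subseteq> T13" "A2 \<union> A3 \<subseteq> T23"
  shows "tiso (ssum (ssum A1 A2) A3)"
  using p unfolding polar_iso_def
proof (elim disjE exE conjE)
  fix B assume a: "alternating_form B" and e: "tiso = totally_isotropic B"
  then show ?thesis using three_bil[of B, OF _ _ s t[unfolded e] c] a
    unfolding alternating_form_def bilinear_form_def by blast
next
  fix \<sigma> B assume h: "hermitian_form \<sigma> B" and e: "tiso = totally_isotropic B"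
  have ad1: "\<And>x y z. B (x + y) z = B x z + B y z" using h unfolding hermitian_form_def by blast
  have sw: "\<And>x y. B y x = \<sigma> (B x y)" using h unfolding hermitian_form_def by blast
  have sa: "\<And>a b. \<sigma> (a + b) = \<sigma> a + \<sigma> b" using h unfolding hermitian_form_def field_involution_def by blast
  have ad2: "B x (y + z) = B x y + B x z" for x y z
    using sw[of x "y+z"] ad1[of y z x] sa sw[of x y] sw[of x z] by simp
  show ?thesis using three_bil[of B, OF ad1 ad2 s t[unfolded e] c] e by simp
next
  fix Q assume q: "quadratic_form Q" and e: "tiso = totally_singular Q"
  show ?thesis using three_quad[OF q s t[unfolded e] c] e by simp
qed

lemma dim_le_witt: "tiso W \<Longrightarrow> vec.dim W \<le> witt_index (tiso :: ('a::{field,finite} ^'n) set \<Rightarrow> bool)"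
  unfolding witt_index_def
  by (rule Max_ge) (auto intro: finite_imageI finite)

lemma extend_vertex:
  assumes "tiso (W :: ('a::{field,finite} ^'n) set)"
  shows "\<exists>z\<in>dp_vertices tiso. W \<subseteq> z"
proof -
  have "finite {V. tiso V \<and> W \<subseteq> V}" by (rule finite)
  from finite_has_maximal2[OF this, of W] assms obtain m where
    m: "tiso m" "W \<subseteq> m" "\<And>b. tiso b \<Longrightarrow> W \<subseteq> b \<Longrightarrow> m \<subseteq> b \<Longrightarrow> m = b" by auto
  have "m \<in> dp_vertices tiso" unfolding dp_vertices_def using m by blast
  then show ?thesis using m by blast
qed

lemma geo_le:
  assumes p: "polar_iso tiso" and w: "tiso w" and u: "vec.subspace u" and v: "vec.subspace v"
  shows "vec.dim (u \<inter> w) + vec.dim (w \<inter> v) \<le> witt_index tiso + vec.dim (u \<inter> v)"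
proof -
  have sw: "vec.subspace w" using polar_sub[OF p w] .
  have s1: "vec.subspace (u \<inter> w)" "vec.subspace (w \<inter> v)" using sw u v by (auto intro: vec.subspace_inter)
  have "vec.dim (ssum (u \<inter> w) (w \<inter> v)) \<le> vec.dim w"
    by (rule vec.dim_subset, rule ssum_le[OF sw]) auto
  moreover have "vec.dim ((u \<inter> w) \<inter> (w \<inter> v)) \<le> vec.dim (u \<inter> v)" by (rule vec.dim_subset) auto
  moreover note ssum_dim[OF s1] dim_le_witt[of tiso w, OF w]
  ultimately show ?thesis by linarith
qed

lemma geo_eq:
  assumes p: "polar_iso tiso" and w: "tiso w" and u: "vec.subspace u" and v: "vec.subspace v"
    and e: "vec.dim (u \<inter> w) + vec.dim (w \<inter> v) = witt_index tiso + vec.dim (u \<inter> v)"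
  shows "u \<inter> v \<subseteq> w" "w = ssum (u \<inter> w) (w \<inter> v)"
proof -
  have sw: "vec.subspace w" using polar_sub[OF p w] .
  have s1: "vec.subspace (u \<inter> w)" "vec.subspace (w \<inter> v)" using sw u v by (auto intro: vec.subspace_inter)
  have a0: "ssum (u \<inter> w) (w \<inter> v) \<subseteq> w" by (rule ssum_le[OF sw]) auto
  have a: "vec.dim (ssum (u \<inter> w) (w \<inter> v)) \<le> vec.dim w"
    by (rule vec.dim_subset, rule a0)
  have b: "vec.dim ((u \<inter> w) \<inter> (w \<inter> v)) \<le> vec.dim (u \<inter> v)" by (rule vec.dim_subset) auto
  note c = ssum_dim[OF s1] dim_le_witt[of tiso w, OF w]
  have "(u \<inter> w) \<inter> (w \<inter> v) = u \<inter> v"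
    by (rule vec.subspace_dim_equal) (use s1 u v a b c e in \<open>auto intro: vec.subspace_inter\<close>)
  then show "u \<inter> v \<subseteq> w" by blast
  show "w = ssum (u \<inter> w) (w \<inter> v)"
    by (rule sym, rule vec.subspace_dim_equal) (use s1 sw a0 a b c e in \<open>auto intro: ssum_sub\<close>)
qed

lemma f_iff:
  assumes p: "polar_iso tiso" and "tiso u" "tiso w" "tiso v"
  shows "f_vec tiso u w v = 1 \<longleftrightarrow>
    vec.dim (u \<inter> w) + vec.dim (w \<inter> v) = witt_index tiso + vec.dim (u \<inter> v)"
proof -
  have "vec.dim (u \<inter> w) \<le> witt_index tiso" "vec.dim (w \<inter> v) \<le> witt_index tiso"
    "vec.dim (u \<inter> v) \<le> witt_index tiso"
    using dim_le_witt[of tiso u, OF assms(2)] dim_le_witt[of tiso w, OF assms(3)]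
      vec.dim_subset[of "u \<inter> w" u] vec.dim_subset[of "w \<inter> v" w] vec.dim_subset[of "u \<inter> v" u] by auto
  then show ?thesis unfolding f_vec_def dp_dist_def by auto
qed


lemma vert_tiso: "w \<in> dp_vertices tiso \<Longrightarrow> tiso w"
  unfolding dp_vertices_def by blast

lemma vert_max: "w \<in> dp_vertices tiso \<Longrightarrow> tiso V \<Longrightarrow> w \<subseteq> V \<Longrightarrow> V = w"
  unfolding dp_vertices_def by blast

lemma ssum_mid: "vec.subspace B \<Longrightarrow> ssum A C \<subseteq> ssum (ssum A B) C"
  unfolding ssum_def using vec.subspace_0 by force

lemma uniq:
  fixes tiso :: "('a::{field,finite} ^'n) set \<Rightarrow> bool"
  assumes p: "polar_iso tiso"
    and u0: "u0 \<in> dp_vertices tiso" and x: "x \<in> dp_vertices tiso" and y: "y \<in> dp_vertices tiso"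
    and z: "z \<in> dp_vertices tiso"
    and z1: "z1 \<in> dp_vertices tiso" "x \<inter> y \<subseteq> z1" "f_vec tiso u0 x z1 = 1" "f_vec tiso u0 y z1 = 1" "f_vec tiso u0 z1 z = 1"
    and z2: "z2 \<in> dp_vertices tiso" "x \<inter> y \<subseteq> z2" "f_vec tiso u0 x z2 = 1" "f_vec tiso u0 y z2 = 1" "f_vec tiso u0 z2 z = 1"
  shows "z1 = z2"
proof -
  note tv = vert_tiso[of _ tiso]
  have t: "tiso u0" "tiso x" "tiso y" "tiso z" "tiso z1" "tiso z2" using u0 x y z z1 z2 tv by auto
  have s: "vec.subspace u0" "vec.subspace x" "vec.subspace y" "vec.subspace z" "vec.subspace z1" "vec.subspace z2"
    using t polar_sub[OF p] by auto
  have a1: "u0 \<inter> z1 \<subseteq> x" "u0 \<inter> z1 \<subseteq> y" "u0 \<inter> z2 \<subseteq> x" "u0 \<inter> z2 \<subseteq> y"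
    using geo_eq(1)[OF p t(2) s(1) s(5)] geo_eq(1)[OF p t(3) s(1) s(5)]
      geo_eq(1)[OF p t(2) s(1) s(6)] geo_eq(1)[OF p t(3) s(1) s(6)]
      f_iff[OF p t(1) t(2) t(5)] f_iff[OF p t(1) t(3) t(5)]
      f_iff[OF p t(1) t(2) t(6)] f_iff[OF p t(1) t(3) t(6)] z1 z2 by auto
  have d1: "z1 = ssum (u0 \<inter> z1) (z1 \<inter> z)" "z2 = ssum (u0 \<inter> z2) (z2 \<inter> z)"
    using geo_eq(2)[OF p t(5) s(1) s(4)] geo_eq(2)[OF p t(6) s(1) s(4)]
      f_iff[OF p t(1) t(5) t(4)] f_iff[OF p t(1) t(6) t(4)] z1 z2 by auto
  have eqP: "u0 \<inter> z1 = u0 \<inter> z2" using a1 z1(2) z2(2) by blast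
  have ss: "vec.subspace (u0 \<inter> z1)" "vec.subspace (z1 \<inter> z)" "vec.subspace (z2 \<inter> z)"
    using s by (auto intro: vec.subspace_inter)
  define T where "T = ssum (ssum (u0 \<inter> z1) (z1 \<inter> z)) (z2 \<inter> z)"
  have tT: "tiso T" unfolding T_def
    by (rule polar_three[OF p ss t(5) t(6) t(4)]) (use eqP in auto)
  have "z1 \<subseteq> T" unfolding T_def using ssum_left[OF ss(3)] d1(1) by blast
  then have "T = z1" using vert_max[OF z1(1) tT] by blast
  moreover have "z2 \<subseteq> T" unfolding T_def using ssum_mid[OF ss(2), of "u0 \<inter> z1" "z2 \<inter> z"] d1(2) eqP by simp
  then have "T = z2" using vert_max[OF z2(1) tT] by blast
  ultimately show ?thesis by simp
qed


lemma exist: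
  fixes tiso :: "('a::{field,finite} ^'n) set \<Rightarrow> bool"
  assumes p: "polar_iso tiso"
    and u0: "u0 \<in> dp_vertices tiso" and x: "x \<in> dp_vertices tiso" and y: "y \<in> dp_vertices tiso"
    and z: "z \<in> dp_vertices tiso"
    and fx: "f_vec tiso u0 x z = 1" and fy: "f_vec tiso u0 y z = 1"
  shows "\<exists>z'. z' \<in> dp_vertices tiso \<and> x \<inter> y \<subseteq> z' \<and>
           f_vec tiso u0 x z' = 1 \<and> f_vec tiso u0 y z' = 1 \<and> f_vec tiso u0 z' z = 1"
proof -
  note tv = vert_tiso[of _ tiso]
  have t: "tiso u0" "tiso x" "tiso y" "tiso z" using u0 x y z tv by auto
  have s: "vec.subspace u0" "vec.subspace x" "vec.subspace y" "vec.subspace z"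
    using t polar_sub[OF p] by auto
  define d where "d = witt_index tiso"
  define Px where "Px = u0 \<inter> x"
  define Py where "Py = u0 \<inter> y"
  define Zx where "Zx = x \<inter> z"
  define Zy where "Zy = y \<inter> z"
  define A where "A = u0 \<inter> z"
  have ss: "vec.subspace Px" "vec.subspace Py" "vec.subspace Zx" "vec.subspace Zy" "vec.subspace A"
    "vec.subspace (Px \<inter> Py)" "vec.subspace (Zx \<inter> Zy)"
    unfolding Px_def Py_def Zx_def Zy_def A_def using s by (auto intro: vec.subspace_inter)
  have ex: "vec.dim Px + vec.dim Zx = d + vec.dim A"
    using f_iff[OF p t(1) t(2) t(4)] fx unfolding Px_def Zx_def A_def d_def by simp
  have ey: "vec.dim Py + vec.dim Zy = d + vec.dim A"
    using f_iff[OF p t(1) t(3) t(4)] fy unfolding Py_def Zy_def A_def d_def by simp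
  have Ax: "A \<subseteq> x" and xd: "x = ssum Px Zx"
    using geo_eq[OF p t(2) s(1) s(4)] ex unfolding Px_def Zx_def A_def d_def by auto
  have Ay: "A \<subseteq> y" and yd: "y = ssum Py Zy"
    using geo_eq[OF p t(3) s(1) s(4)] ey unfolding Py_def Zy_def A_def d_def by auto
  define W where "W = ssum (ssum (Px \<inter> Py) Zx) Zy"
  have tW: "tiso W" unfolding W_def
    by (rule polar_three[OF p ss(6) ss(3) ss(4) t(2) t(3) t(4)])
      (auto simp: Px_def Py_def Zx_def Zy_def)
  have UW: "x \<inter> y \<subseteq> W"
  proof
    fix v assume v: "v \<in> x \<inter> y"
    then obtain p q where pq: "v = p + q" "p \<in> Px" "q \<in> Zx" using xd unfolding ssum_def by blast
    obtain p' q' where pq': "v = p' + q'" "p' \<in> Py" "q' \<in> Zy" using v yd unfolding ssum_def by blast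
    have e: "p - p' = q' - q" using pq(1) pq'(1) by (simp add: algebra_simps)
    have "p - p' \<in> u0" using pq pq' s(1) unfolding Px_def Py_def by (auto intro: vec.subspace_diff)
    moreover have "q' - q \<in> z" using pq pq' s(4) unfolding Zx_def Zy_def by (auto intro: vec.subspace_diff)
    ultimately have "p - p' \<in> y" using e Ay unfolding A_def by auto
    then have "p' + (p - p') \<in> y" using pq' unfolding Py_def by (intro vec.subspace_add[OF s(3)]) auto
    then have "p \<in> y" by simp
    then have "p \<in> Px \<inter> Py" using pq unfolding Px_def Py_def by auto
    moreover have "(0::'a^'n) \<in> Zy" using ss(4) by (rule vec.subspace_0)
    ultimately have "(p + q) + 0 \<in> W" unfolding W_def ssum_def using pq by blast
    then show "v \<in> W" using pq by simp
  qed
  obtain z' where z': "z' \<in> dp_vertices tiso" "W \<subseteq> z'" using extend_vertex[of tiso W, OF tW] by blast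
  have tz': "tiso z'" using z' tv by auto
  have sz': "vec.subspace z'" using tz' polar_sub[OF p] by auto
  have dPP: "vec.dim (ssum Px Py) + vec.dim (Px \<inter> Py) = vec.dim Px + vec.dim Py"
    using ssum_dim[OF ss(1) ss(2)] .
  have dZZ: "vec.dim (ssum Zx Zy) + vec.dim (Zx \<inter> Zy) = vec.dim Zx + vec.dim Zy"
    using ssum_dim[OF ss(3) ss(4)] .
  have sPP: "vec.subspace (ssum Px Py)" using ss by (intro ssum_sub)
  have tM: "tiso (ssum (ssum Px Py) (Zx \<inter> Zy))"
    by (rule polar_three[OF p ss(1) ss(2) ss(7) t(1) t(2) t(3)])
      (auto simp: Px_def Py_def Zx_def Zy_def)
  have dM: "vec.dim (ssum (ssum Px Py) (Zx \<inter> Zy)) \<le> d"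
    using dim_le_witt[of tiso, OF tM] unfolding d_def .
  have dM2: "vec.dim (ssum (ssum Px Py) (Zx \<inter> Zy)) + vec.dim (ssum Px Py \<inter> (Zx \<inter> Zy))
     = vec.dim (ssum Px Py) + vec.dim (Zx \<inter> Zy)"
    using ssum_dim[OF sPP ss(7)] .
  have "ssum Px Py \<subseteq> u0" by (rule ssum_le[OF s(1)]) (auto simp: Px_def Py_def)
  then have "ssum Px Py \<inter> (Zx \<inter> Zy) \<subseteq> A" unfolding A_def Zx_def by auto
  then have dI: "vec.dim (ssum Px Py \<inter> (Zx \<inter> Zy)) \<le> vec.dim A" by (rule vec.dim_subset)
  have D1: "vec.dim (Px \<inter> Py) + vec.dim (ssum Zx Zy) \<ge> d + vec.dim A"
    using dPP dZZ dM dM2 dI ex ey by linarith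
  have PPW: "Px \<inter> Py \<subseteq> W" unfolding W_def using ssum_left[OF ss(3)] ssum_left[OF ss(4)] by blast
  have ZxW: "Zx \<subseteq> W" unfolding W_def using ssum_right[OF ss(6)] ssum_left[OF ss(4)] by blast
  have ZyW: "Zy \<subseteq> W" unfolding W_def using ssum_right[OF ssum_sub[OF ss(6) ss(3)]] by blast
  have ge1: "vec.dim (Px \<inter> Py) \<le> vec.dim (u0 \<inter> z')"
    by (rule vec.dim_subset) (use PPW z' in \<open>auto simp: Px_def\<close>)
  have "ssum Zx Zy \<subseteq> z' \<inter> z"
    by (rule ssum_le) (use ZxW ZyW z' s(4) sz' in \<open>auto simp: Zx_def Zy_def intro: vec.subspace_inter\<close>)
  then have ge2: "vec.dim (ssum Zx Zy) \<le> vec.dim (z' \<inter> z)" by (rule vec.dim_subset)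
  have le: "vec.dim (u0 \<inter> z') + vec.dim (z' \<inter> z) \<le> d + vec.dim A"
    using geo_le[OF p tz' s(1) s(4)] unfolding d_def A_def .
  have fz: "vec.dim (u0 \<inter> z') + vec.dim (z' \<inter> z) = d + vec.dim A"
    using le ge1 ge2 D1 by linarith
  have le1: "vec.dim (u0 \<inter> z') \<le> vec.dim (Px \<inter> Py)" using le ge1 ge2 D1 by linarith
  have PPA: "vec.dim (Px \<inter> Py \<inter> Zx) \<le> vec.dim A" "vec.dim (Px \<inter> Py \<inter> Zy) \<le> vec.dim A"
    by (rule vec.dim_subset, auto simp: Px_def Zx_def Zy_def A_def)+
  have "ssum (Px \<inter> Py) Zx \<subseteq> x \<inter> z'"
    by (rule ssum_le) (use PPW ZxW z' s(2) sz' in \<open>auto simp: Px_def Zx_def intro: vec.subspace_inter\<close>)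
  then have gx: "vec.dim (ssum (Px \<inter> Py) Zx) \<le> vec.dim (x \<inter> z')" by (rule vec.dim_subset)
  have "ssum (Px \<inter> Py) Zy \<subseteq> y \<inter> z'"
    by (rule ssum_le) (use PPW ZyW z' s(3) sz' in \<open>auto simp: Py_def Zy_def intro: vec.subspace_inter\<close>)
  then have gy: "vec.dim (ssum (Px \<inter> Py) Zy) \<le> vec.dim (y \<inter> z')" by (rule vec.dim_subset)
  have lx: "vec.dim (u0 \<inter> x) + vec.dim (x \<inter> z') \<le> d + vec.dim (u0 \<inter> z')"
    using geo_le[OF p t(2) s(1) sz'] unfolding d_def .
  have ly: "vec.dim (u0 \<inter> y) + vec.dim (y \<inter> z') \<le> d + vec.dim (u0 \<inter> z')"
    using geo_le[OF p t(3) s(1) sz'] unfolding d_def .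
  have fx': "vec.dim (u0 \<inter> x) + vec.dim (x \<inter> z') = d + vec.dim (u0 \<inter> z')"
    using lx gx PPA(1) ssum_dim[OF ss(6) ss(3)] ex le1 unfolding Px_def by linarith
  have fy': "vec.dim (u0 \<inter> y) + vec.dim (y \<inter> z') = d + vec.dim (u0 \<inter> z')"
    using ly gy PPA(2) ssum_dim[OF ss(6) ss(4)] ey le1 unfolding Py_def by linarith
  show ?thesis
    apply (rule exI[of _ z'])
    using z' UW fx' fy' fz f_iff[OF p t(1) t(2) tz'] f_iff[OF p t(1) t(3) tz'] f_iff[OF p t(1) tz' t(4)]
    unfolding d_def A_def by auto
qed


theorem lemmaA4:
  fixes tiso :: "('a::{field,finite} ^'n) set \<Rightarrow> bool"
    and u0 x y z :: "('a ^'n) set"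
  assumes "polar_iso tiso"
    and "u0 \<in> dp_vertices tiso" and "x \<in> dp_vertices tiso" and "y \<in> dp_vertices tiso"
    and "z \<in> dp_vertices tiso"
    and "f_vec tiso u0 x z = 1" and "f_vec tiso u0 y z = 1"
  shows "\<exists>!z'. z' \<in> {w \<in> dp_vertices tiso. x \<inter> y \<subseteq> w} \<and>
           f_vec tiso u0 x z' = 1 \<and> f_vec tiso u0 y z' = 1 \<and> f_vec tiso u0 z' z = 1"
proof -
  obtain z' where z': "z' \<in> dp_vertices tiso" "x \<inter> y \<subseteq> z'"
    "f_vec tiso u0 x z' = 1" "f_vec tiso u0 y z' = 1" "f_vec tiso u0 z' z = 1"
    using exist[OF assms] by blast
  show ?thesis
  proof (rule ex1I[of _ z'])
    show "z' \<in> {w \<in> dp_vertices tiso. x \<inter> y \<subseteq> w} \<and>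
           f_vec tiso u0 x z' = 1 \<and> f_vec tiso u0 y z' = 1 \<and> f_vec tiso u0 z' z = 1"
      using z' by blast
  next
    fix z2 assume "z2 \<in> {w \<in> dp_vertices tiso. x \<inter> y \<subseteq> w} \<and>
           f_vec tiso u0 x z2 = 1 \<and> f_vec tiso u0 y z2 = 1 \<and> f_vec tiso u0 z2 z = 1"
    then show "z2 = z'" using uniq[OF assms(1-5), of z2 z'] z' by blast
  qed
qed

end
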